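(* Let $0<\epsilon<0.5$ and $r<1$. Let $\gamma_k=\frac{\gamma_0}{(k+1)^{0.5+0.5\epsilon}}$ and $\lambda_k=\frac{\lambda_0}{(k+1)^{0.5-\epsilon}}$ for $k\ge0$, with $\gamma_0,\lambda_0>0$ and $\gamma_0\lambda_0\mu_h\le 2m$. Let $\{\bar x_N\}$ be generated by the IR-IG method with these sequences and averaging parameter $r$. Then (a) $\bar x_N\to x_h^*$ as $N\to\infty$; (b) $f(\bar x_N)-f^*=\mathcal{O}\big(1/N^{0.5-\epsilon}\big)$.
   Context: Standing setup: $X\subset\mathbb{R}^n$ is nonempty, compact and convex. $f_1,\dots,f_m:\mathbb{R}^n\to\mathbb{R}$ are convex (possibly nondifferentiable) functions and $f=\sum_{i=1}^m f_i$. $h:\mathbb{R}^n\to\mathbb{R}$ is strongly convex with parameter $\mu_h>0$ (possibly nondifferentiable). Let $f^*=\min_{x\in X}f(x)$, $X^*=\arg\min_{x\in X}f(x)$, and let $x_h^*$ be the unique minimizer of $h$ over $X^*$. $\mathcal{P}_X$ denotes Euclidean projection onto $X$. IR-IG method: given $x_0\in X$, positive sequences $\{\gamma_k\}$, $\{\lambda_k\}$ and a constant $r<1$, for each $k\ge0$ set $x_{k,0}=x_k$; for $i=0,\dots,m-1$ pick any $g_{f_{i+1}}(x_{k,i})\in\partial f_{i+1}(x_{k,i})$ and $g_h(x_{k,i})\in\partial h(x_{k,i})$ and set $x_{k,i+1}=\mathcal{P}_X\big(x_{k,i}-\gamma_k\big(g_{f_{i+1}}(x_{k,i})+\tfrac{\lambda_k}{m}g_h(x_{k,i})\big)\big)$;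 then set $x_{k+1}=x_{k,m}$. The averaged iterates are $\bar x_N=\sum_{k=0}^{N-1}\gamma_k^r x_k\big/\sum_{k=0}^{N-1}\gamma_k^r$ for $N\ge1$. *)

theory Defs
  imports "HOL-Analysis.Analysis" "HOL-Library.Landau_Symbols"
begin

definition subdiff :: "('a::real_inner \<Rightarrow> real) \<Rightarrow> 'a \<Rightarrow> 'a set" where
  "subdiff g x = {v. \<forall>y. g y \<ge> g x + inner v (y - x)}"

definition strongly_convex :: "('a::real_normed_vector \<Rightarrow> real) \<Rightarrow> real \<Rightarrow> bool" where
  "strongly_convex g mu \<longleftrightarrow>
     (\<forall>x y t. 0 \<le> t \<and> t \<le> 1 \<longrightarrow>
        g (t *\<^sub>R x + (1 - t) *\<^sub>R y) \<le> t * g x + (1 - t) * g y - mu / 2 * t * (1 - t) * (norm (x - y))\<^sup>2)"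

end

theory Submission
  imports Defs
begin


lemma pstep:
  fixes k :: nat and e :: real
  assumes e: "e > 0"
  shows "(e \<le> 1 \<longrightarrow> e * (real k + 1) powr (e - 1) \<le> (real k + 1) powr e - real k powr e) \<and>
         (e \<ge> 1 \<longrightarrow> (real k + 1) powr e - real k powr e \<le> e * (real k + 1) powr (e - 1))"
proof (cases "k = 0")
  case True
  then show ?thesis using e by simp
next
  case False
  hence k: "real k \<ge> 1" by simp
  obtain z where z: "real k < z" "z < real k + 1"
    and eq: "(real k + 1) powr e - real k powr e = (real k + 1 - real k) * (e * z powr (e - 1))"
  proof -
    have "\<And>x. real k \<le> x \<Longrightarrow> x \<le> real k + 1 \<Longrightarrow> ((\<lambda>z. z powr e) has_real_derivative e * x powr (e - 1)) (at x)"
      using k by (intro has_real_derivative_powr) auto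
    from MVT2[of "real k" "real k + 1" "\<lambda>z. z powr e" "\<lambda>z. e * z powr (e - 1)", OF _ this]
    show ?thesis using that by auto
  qed
  have zp: "z > 0" using z k by simp
  show ?thesis
  proof (intro conjI impI)
    assume "e \<le> 1"
    hence "(real k + 1) powr (e - 1) \<le> z powr (e - 1)"
      using powr_mono2'[of "e-1" z "real k + 1"] zp z by simp
    thus "e * (real k + 1) powr (e - 1) \<le> (real k + 1) powr e - real k powr e"
      using eq e by simp
  next
    assume "e \<ge> 1"
    hence "z powr (e - 1) \<le> (real k + 1) powr (e - 1)"
      using powr_mono2[of "e-1" z "real k + 1"] zp z by simp
    thus "(real k + 1) powr e - real k powr e \<le> e * (real k + 1) powr (e - 1)"
      using eq e by simp
  qed
qed

lemma psum_tele:
  fixes e :: real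
  shows "(\<Sum>k<N. (real k + 1) powr e - real k powr e) = real N powr e"
  using sum_lessThan_telescope[of "\<lambda>k. real k powr e" N] by (simp add: add.commute)

lemma psum_bounds:
  fixes e :: real and N :: nat
  assumes e: "e > 0" and N: "N \<ge> 1"
  shows "min 1 (1/e) * real N powr e \<le> (\<Sum>k<N. (real k + 1) powr (e - 1))"
    and "(\<Sum>k<N. (real k + 1) powr (e - 1)) \<le> max 1 (1/e) * real N powr e"
proof -
  have Np: "real N > 0" using N by simp
  have NN: "real N * real N powr (e - 1) = real N powr e"
    using Np by (simp add: powr_diff)
  show "min 1 (1/e) * real N powr e \<le> (\<Sum>k<N. (real k + 1) powr (e - 1))"
  proof (cases "e \<le> 1")
    case True
    have "(\<Sum>k<N. real N powr (e - 1)) \<le> (\<Sum>k<N. (real k + 1) powr (e - 1))"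
      by (rule sum_mono) (use True in \<open>auto intro!: powr_mono2'\<close>)
    hence "real N powr e \<le> (\<Sum>k<N. (real k + 1) powr (e - 1))" using NN by simp
    moreover have "min 1 (1/e) * real N powr e \<le> 1 * real N powr e" by (rule mult_right_mono) auto
    ultimately show ?thesis by linarith
  next
    case False
    have "(\<Sum>k<N. (real k + 1) powr e - real k powr e) \<le> (\<Sum>k<N. e * (real k + 1) powr (e - 1))"
      by (rule sum_mono) (use pstep[OF e] False in auto)
    hence "real N powr e \<le> e * (\<Sum>k<N. (real k + 1) powr (e - 1))"
      by (simp add: psum_tele sum_distrib_left)
    hence "(1/e) * real N powr e \<le> (\<Sum>k<N. (real k + 1) powr (e - 1))" using e
      by (simp add: field_simps)
    moreover have "min 1 (1/e) * real N powr e \<le> (1/e) * real N powr e" by (rule mult_right_mono) auto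
    ultimately show ?thesis by linarith
  qed
  show "(\<Sum>k<N. (real k + 1) powr (e - 1)) \<le> max 1 (1/e) * real N powr e"
  proof (cases "e \<le> 1")
    case True
    have "(\<Sum>k<N. e * (real k + 1) powr (e - 1)) \<le> (\<Sum>k<N. (real k + 1) powr e - real k powr e)"
      by (rule sum_mono) (use pstep[OF e] True in auto)
    hence "e * (\<Sum>k<N. (real k + 1) powr (e - 1)) \<le> real N powr e"
      by (simp add: psum_tele sum_distrib_left)
    hence "(\<Sum>k<N. (real k + 1) powr (e - 1)) \<le> (1/e) * real N powr e" using e
      by (simp add: field_simps)
    moreover have "(1/e) * real N powr e \<le> max 1 (1/e) * real N powr e" by (rule mult_right_mono) auto
    ultimately show ?thesis by linarith
  next
    case False
    have "(\<Sum>k<N. (real k + 1) powr (e - 1)) \<le> (\<Sum>k<N. real N powr (e - 1))"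
      by (rule sum_mono) (use False in \<open>auto intro!: powr_mono2\<close>)
    hence "(\<Sum>k<N. (real k + 1) powr (e - 1)) \<le> real N powr e" using NN by simp
    moreover have "1 * real N powr e \<le> max 1 (1/e) * real N powr e" by (rule mult_right_mono) auto
    ultimately show ?thesis by linarith
  qed
qed



lemma wtele:
  fixes c E :: "nat \<Rightarrow> real"
  assumes c0: "\<And>k. c k \<ge> 0" and cmono: "\<And>k. c k \<le> c (Suc k)"
    and E0: "\<And>k. E k \<ge> 0" and ER: "\<And>k. E k \<le> R"
  shows "(\<Sum>k<N. c k * (E k - E (Suc k))) \<le> c N * R"
proof -
  have "(\<Sum>k<N. c k * (E k - E (Suc k))) + c N * E N \<le> c N * R"
  proof (induction N)
    case 0 then show ?case using ER[of 0] c0[of 0] by (simp add: mult_left_mono)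
  next
    case (Suc N)
    have "(\<Sum>k<Suc N. c k * (E k - E (Suc k))) + c (Suc N) * E (Suc N)
        = ((\<Sum>k<N. c k * (E k - E (Suc k))) + c N * E N) + (c (Suc N) - c N) * E (Suc N)"
      by (simp add: algebra_simps)
    also have "\<dots> \<le> c N * R + (c (Suc N) - c N) * R"
      using Suc ER[of "Suc N"] cmono[of N] by (intro add_mono mult_left_mono) auto
    finally show ?case by (simp add: algebra_simps)
  qed
  moreover have "c N * E N \<ge> 0" using c0 E0 by simp
  ultimately show ?thesis by linarith
qed

lemma subgrad_bound:
  fixes g :: "'n::euclidean_space \<Rightarrow> real"
  assumes v: "v \<in> subdiff g x" and M: "\<And>z. z \<in> cball x 1 \<Longrightarrow> \<bar>g z\<bar> \<le> M"
  shows "norm v \<le> 2 * M"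
proof (cases "v = 0")
  case True then show ?thesis using M[of x] by simp
next
  case False
  let ?y = "x + (1 / norm v) *\<^sub>R v"
  have "?y \<in> cball x 1" using False by (simp add: dist_norm)
  have "g ?y \<ge> g x + inner v (?y - x)" using v unfolding subdiff_def by blast
  moreover have "inner v (?y - x) = norm v"
    using False by (simp add: dot_square_norm power2_eq_square)
  ultimately show ?thesis using M[of x] M[OF \<open>?y \<in> cball x 1\<close>] by simp
qed

lemma convex_lip:
  fixes g :: "'n::euclidean_space \<Rightarrow> real"
  assumes g: "convex_on UNIV g"
    and M: "\<And>z. norm z \<le> B + 1 \<Longrightarrow> \<bar>g z\<bar> \<le> M"
    and u: "norm u \<le> B" and v: "norm v \<le> B"
  shows "g v - g u \<le> 2 * M * norm (u - v)"
proof (cases "u = v")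
  case True then show ?thesis by simp
next
  case False
  define d where "d = norm (v - u)"
  have d: "d > 0" using False by (simp add: d_def)
  define w where "w = v + (1/d) *\<^sub>R (v - u)"
  define t where "t = d / (1 + d)"
  have "norm w \<le> norm v + norm ((1/d) *\<^sub>R (v - u))" unfolding w_def by (rule norm_triangle_ineq)
  also have "norm ((1/d) *\<^sub>R (v - u)) = 1" using d by (simp add: d_def)
  finally have w: "norm w \<le> B + 1" using v by simp
  have t: "0 \<le> t" "t \<le> 1" using d by (auto simp: t_def)
  have "(1 - t) *\<^sub>R u + t *\<^sub>R w = v"
  proof -
    have a: "1 - d / (1 + d) = 1 / (1+d)" using d by (simp add: field_simps)
    have b: "(d / (1 + d)) *\<^sub>R (v + (1/d) *\<^sub>R (v - u)) = (d / (1 + d)) *\<^sub>R v + (1 / (1+d)) *\<^sub>R v - (1 / (1+d)) *\<^sub>R u"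
      using d by (simp add: scaleR_add_right scaleR_diff_right)
    have c: "(d / (1 + d)) + (1 / (1+d)) = 1" using d by (simp add: field_simps)
    have "(d / (1 + d)) *\<^sub>R v + (1 / (1+d)) *\<^sub>R v = v"
      using c by (metis scaleR_add_left scaleR_one)
    then show ?thesis unfolding t_def w_def a b by simp
  qed
  hence "g v \<le> (1 - t) * g u + t * g w"
    using convex_onD[OF g t] by (metis UNIV_I)
  hence "g v - g u \<le> t * (g w - g u)" by (simp add: algebra_simps)
  also have "\<dots> \<le> t * (2 * M)"
    using M[OF w] M[of u] u t by (intro mult_left_mono) auto
  also have "\<dots> \<le> d * (2 * M)"
  proof (rule mult_right_mono)
    show "t \<le> d" using d by (simp add: t_def field_simps)
    show "0 \<le> 2 * M" using M[of v] v by simp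
  qed
  finally show ?thesis by (simp add: d_def norm_minus_commute mult.commute)
qed

lemma proj_step:
  fixes X :: "'n::euclidean_space set"
  assumes X: "convex X" "closed X" "X \<noteq> {}" and y: "y \<in> X"
  shows "norm (closest_point X z - y) \<le> norm (z - y)"
  using closest_point_lipschitz[OF X, of z y] closest_point_self[OF y]
  by (simp add: dist_norm)

lemma norm_sq_expand:
  fixes a d :: "'n::real_inner"
  shows "(norm (a - g *\<^sub>R d))\<^sup>2 = (norm a)\<^sup>2 - 2 * g * inner d a + g\<^sup>2 * (norm d)\<^sup>2"
  unfolding power2_norm_eq_inner by (simp add: inner_simps inner_commute algebra_simps power2_eq_square)



lemma convex_on_sum_fun:
  fixes g :: "nat \<Rightarrow> 'a::real_vector \<Rightarrow> real"
  assumes "\<And>i. i < m \<Longrightarrow> convex_on UNIV (g i)"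
  shows "convex_on UNIV (\<lambda>y. \<Sum>i<m. g i y)"
  using assms
proof (induction m)
  case 0 then show ?case by (simp add: convex_on_const)
next
  case (Suc m)
  then show ?case by (simp add: convex_on_add)
qed

lemma sc_convex:
  assumes "strongly_convex h mu" "mu \<ge> 0"
  shows "convex_on UNIV h"
proof (rule convex_onI)
  fix t :: real and x y
  assume t0: "0 < t" "t < 1"
  hence t: "0 \<le> t \<and> t \<le> 1" by simp
  have "h ((1 - t) *\<^sub>R x + (1 - (1 - t)) *\<^sub>R y) \<le> (1 - t) * h x + (1 - (1 - t)) * h y
      - mu / 2 * (1 - t) * (1 - (1 - t)) * (norm (x - y))\<^sup>2"
  proof -
    have "\<forall>x y t. 0 \<le> t \<and> t \<le> 1 \<longrightarrow>
        h (t *\<^sub>R x + (1 - t) *\<^sub>R y) \<le> t * h x + (1 - t) * h y - mu / 2 * t * (1 - t) * (norm (x - y))\<^sup>2"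
      using assms(1) unfolding strongly_convex_def .
    from this[rule_format, of "1 - t" x y] t show ?thesis by simp
  qed
  moreover have "mu / 2 * (1 - t) * (1 - (1 - t)) * (norm (x - y))\<^sup>2 \<ge> 0"
    using t assms(2) by simp
  ultimately show "h ((1 - t) *\<^sub>R x + t *\<^sub>R y) \<le> (1 - t) * h x + t * h y" by simp
qed simp

lemma jensen_w:
  fixes g :: "'a::real_vector \<Rightarrow> real" and w :: "nat \<Rightarrow> real"
  assumes g: "convex_on UNIV g" and N: "N \<ge> 1" and w: "\<And>k. w k > 0"
  shows "g ((\<Sum>k<N. w k *\<^sub>R y k) /\<^sub>R (\<Sum>k<N. w k)) - c \<le> (\<Sum>k<N. w k * (g (y k) - c)) / (\<Sum>k<N. w k)"
proof -
  define W where "W = (\<Sum>k<N. w k)"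
  have "0 \<in> {..<N}" using N by simp
  hence ne: "{..<N} \<noteq> {}" by blast
  have W: "W > 0" unfolding W_def using ne w by (intro sum_pos) auto
  have eq: "(\<Sum>k<N. w k *\<^sub>R y k) /\<^sub>R W = (\<Sum>k<N. (w k / W) *\<^sub>R y k)"
    by (simp add: scaleR_sum_right divide_inverse_commute)
  have wW: "\<And>k. w k / W \<ge> 0" using w W by (metis divide_nonneg_pos less_eq_real_def)
  have s1: "(\<Sum>k<N. w k / W) = 1" using W by (simp add: W_def sum_divide_distrib[symmetric])
  have "g (\<Sum>k<N. (w k / W) *\<^sub>R y k) \<le> (\<Sum>k<N. (w k / W) * g (y k))"
    using N by (intro convex_on_sum[OF _ _ g s1]) (use ne wW in auto)
  also have "\<dots> = (\<Sum>k<N. w k * (g (y k) - c)) / W + c"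
  proof -
    have "(\<Sum>k<N. (w k / W) * g (y k)) - c * (\<Sum>k<N. w k / W) = (\<Sum>k<N. (w k / W) * g (y k) - c * (w k / W))"
      by (simp add: sum_subtractf sum_distrib_left)
    also have "\<dots> = (\<Sum>k<N. w k * (g (y k) - c) / W)"
      by (rule sum.cong) (simp_all add: diff_divide_distrib right_diff_distrib)
    also have "\<dots> = (\<Sum>k<N. w k * (g (y k) - c)) / W"
      by (simp add: sum_divide_distrib)
    finally have "(\<Sum>k<N. w k * (g (y k) - c)) / W = (\<Sum>k<N. (w k / W) * g (y k)) - c * (\<Sum>k<N. w k / W)" by simp
    then show ?thesis using s1 by simp
  qed
  finally show ?thesis using eq by (simp add: W_def)
qed

lemma avg_in:
  fixes X :: "'a::real_vector set" and w :: "nat \<Rightarrow> real"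
  assumes X: "convex X" and N: "N \<ge> 1" and w: "\<And>k. w k > 0" and y: "\<And>k. y k \<in> X"
  shows "(\<Sum>k<N. w k *\<^sub>R y k) /\<^sub>R (\<Sum>k<N. w k) \<in> X"
proof -
  define W where "W = (\<Sum>k<N. w k)"
  have "0 \<in> {..<N}" using N by simp
  hence ne: "{..<N} \<noteq> {}" by blast
  have W: "W > 0" unfolding W_def using ne w by (intro sum_pos) auto
  have eq: "(\<Sum>k<N. w k *\<^sub>R y k) /\<^sub>R W = (\<Sum>k<N. (w k / W) *\<^sub>R y k)"
    by (simp add: scaleR_sum_right divide_inverse_commute)
  have wW: "\<And>k. w k / W \<ge> 0" using w W by (metis divide_nonneg_pos less_eq_real_def)
  have s1: "(\<Sum>k<N. w k / W) = 1" using W by (simp add: W_def sum_divide_distrib[symmetric])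
  have "(\<Sum>k<N. (w k / W) *\<^sub>R y k) \<in> X"
    by (rule convex_sum[OF _ X s1]) (use ne wW y in auto)
  then show ?thesis using eq by (simp add: W_def)
qed

lemma uniq:
  fixes X :: "'n::euclidean_space set"
  assumes X: "convex X" and f: "convex_on UNIV f" and h: "strongly_convex h mu" and mu: "mu > 0"
    and xh: "xh \<in> X" and fmin: "\<And>y. y \<in> X \<Longrightarrow> f xh \<le> f y"
    and hmin: "\<And>y. y \<in> X \<Longrightarrow> f y \<le> f xh \<Longrightarrow> h xh \<le> h y"
    and z: "z \<in> X" "f z \<le> f xh" "h z \<le> h xh"
  shows "z = xh"
proof -
  define mid where "mid = (1 - 1/2) *\<^sub>R z + (1/2::real) *\<^sub>R xh"
  have mX: "mid \<in> X" unfolding mid_def using X z xh by (intro convexD) auto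
  have "f mid \<le> (1 - 1/2) * f z + (1/2) * f xh"
    unfolding mid_def by (rule convex_onD[OF f]) auto
  hence "f mid \<le> f xh" using z by simp
  hence "h xh \<le> h mid" using hmin mX by simp
  moreover have "h mid \<le> (1/2) * h z + (1 - 1/2) * h xh - mu / 2 * (1/2) * (1 - 1/2) * (norm (z - xh))\<^sup>2"
  proof -
    have "\<forall>x y t. 0 \<le> t \<and> t \<le> 1 \<longrightarrow>
        h (t *\<^sub>R x + (1 - t) *\<^sub>R y) \<le> t * h x + (1 - t) * h y - mu / 2 * t * (1 - t) * (norm (x - y))\<^sup>2"
      using h unfolding strongly_convex_def .
    from this[rule_format, of "1/2" z xh] show ?thesis by (simp add: mid_def)
  qed
  ultimately have "mu / 8 * (norm (z - xh))\<^sup>2 \<le> 0" using z by simp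
  hence "(norm (z - xh))\<^sup>2 \<le> 0" using mu by (simp add: mult_le_0_iff)
  thus ?thesis by simp
qed

lemma sep:
  fixes X :: "'n::euclidean_space set"
  assumes Xc: "compact X" and X: "convex X" and f: "convex_on UNIV f" and h: "strongly_convex h mu" and mu: "mu > 0"
    and fc: "continuous_on UNIV f" and hc: "continuous_on UNIV h"
    and xh: "xh \<in> X" and fmin: "\<And>y. y \<in> X \<Longrightarrow> f xh \<le> f y"
    and hmin: "\<And>y. y \<in> X \<Longrightarrow> f y \<le> f xh \<Longrightarrow> h xh \<le> h y"
    and e: "e > 0"
  shows "\<exists>\<delta>>0. \<forall>z\<in>X. f z \<le> f xh + \<delta> \<longrightarrow> h z \<le> h xh + \<delta> \<longrightarrow> dist z xh < e"
proof -
  define K where "K = X \<inter> - ball xh e"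
  have Kc: "compact K" unfolding K_def by (intro compact_Int_closed Xc) auto
  show ?thesis
  proof (cases "K = {}")
    case True
    show ?thesis
    proof (intro exI[of _ 1] conjI ballI impI)
      fix z assume "z \<in> X"
      hence "z \<in> ball xh e" using True unfolding K_def by blast
      thus "dist z xh < e" by (simp add: dist_commute)
    qed simp
  next
    case False
    define phi where "phi z = max (f z - f xh) (h z - h xh)" for z
    have pc: "continuous_on K phi" unfolding phi_def
      by (intro continuous_intros continuous_on_subset[OF fc] continuous_on_subset[OF hc]) auto
    obtain z0 where z0: "z0 \<in> K" "\<And>y. y \<in> K \<Longrightarrow> phi z0 \<le> phi y"
      using continuous_attains_inf[OF Kc False pc] by blast
    have pos: "phi z0 > 0"
    proof (rule ccontr)
      assume "\<not> phi z0 > 0"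
      hence "f z0 \<le> f xh" "h z0 \<le> h xh" by (auto simp: phi_def)
      hence "z0 = xh" using uniq[OF X f h mu xh fmin hmin] z0 by (auto simp: K_def)
      thus False using z0 e by (auto simp: K_def)
    qed
    show ?thesis
    proof (intro exI[of _ "phi z0 / 2"] conjI ballI impI)
      show "phi z0 / 2 > 0" using pos by simp
      fix z assume z: "z \<in> X" "f z \<le> f xh + phi z0 / 2" "h z \<le> h xh + phi z0 / 2"
      show "dist z xh < e"
      proof (rule ccontr)
        assume "\<not> dist z xh < e"
        hence "z \<in> K" using z by (auto simp: K_def dist_commute)
        hence "phi z0 \<le> phi z" by (rule z0)
        moreover have "phi z \<le> phi z0 / 2" using z(2,3) unfolding phi_def[of z] by (simp add: max_def)
        ultimately show False using pos by simp
      qed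
    qed
  qed
qed



lemma ratio_lemma:
  fixes N :: nat and A Bc c1 c2 p e1 e2 q S1 S2 :: real
  assumes N: "N \<ge> 1" and A: "A \<ge> 0" and Bc: "Bc \<ge> 0" and c1: "c1 > 0" and c2: "c2 \<ge> 0" and p: "p \<ge> 0"
    and S1: "S1 \<ge> c1 * real N powr e1" and S2: "S2 \<le> c2 * real N powr e2"
    and pq: "p - e1 \<le> -q" and eq: "e2 - e1 \<le> -q"
  shows "(A * (real N + 1) powr p + Bc * S2) / S1 \<le> ((A * 2 powr p + Bc * c2) / c1) * real N powr (-q)"
proof -
  define n where "n = real N"
  have n: "n \<ge> 1" using N by (simp add: n_def)
  have n0: "n > 0" using n by simp
  have "(n + 1) powr p \<le> (2 * n) powr p" using n p by (intro powr_mono2) auto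
  also have "\<dots> = 2 powr p * n powr p" by (simp add: powr_mult)
  finally have t1: "(n + 1) powr p \<le> 2 powr p * n powr p" .
  have t2: "n powr p \<le> n powr e1 * n powr (-q)"
  proof -
    have "n powr p = n powr e1 * n powr (p - e1)" using n0 by (simp add: powr_add[symmetric])
    also have "\<dots> \<le> n powr e1 * n powr (-q)" using pq n by (intro mult_left_mono powr_mono) auto
    finally show ?thesis .
  qed
  have t3: "n powr e2 \<le> n powr e1 * n powr (-q)"
  proof -
    have "n powr e2 = n powr e1 * n powr (e2 - e1)" using n0 by (simp add: powr_add[symmetric])
    also have "\<dots> \<le> n powr e1 * n powr (-q)" using eq n by (intro mult_left_mono powr_mono) auto
    finally show ?thesis .
  qed
  define K where "K = A * 2 powr p + Bc * c2"
  have K0: "K \<ge> 0" using A Bc c2 by (simp add: K_def)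
  have "A * (n + 1) powr p \<le> A * (2 powr p * (n powr e1 * n powr (-q)))"
    using t1 t2 A by (intro mult_left_mono) (auto intro: order_trans mult_left_mono)
  moreover have "Bc * S2 \<le> Bc * (c2 * (n powr e1 * n powr (-q)))"
    using S2 t3 Bc c2 unfolding n_def by (intro mult_left_mono) (auto intro: order_trans mult_left_mono)
  ultimately have num: "A * (n + 1) powr p + Bc * S2 \<le> K * (n powr e1 * n powr (-q))"
    by (simp add: K_def algebra_simps)
  have S1p: "c1 * n powr e1 > 0" using c1 n0 by simp
  have "(A * (n + 1) powr p + Bc * S2) / S1 \<le> (K * (n powr e1 * n powr (-q))) / S1"
    using num S1 S1p unfolding n_def by (intro divide_right_mono) auto
  also have "\<dots> \<le> (K * (n powr e1 * n powr (-q))) / (c1 * n powr e1)"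
    using S1 S1p K0 unfolding n_def by (intro divide_left_mono) auto
  also have "\<dots> = (K / c1) * n powr (-q)" using c1 n0 by (simp add: field_simps)
  finally show ?thesis by (simp add: n_def K_def)
qed



theorem theorem2:
  fixes X :: "'n::euclidean_space set"
    and fs :: "nat \<Rightarrow> 'n \<Rightarrow> real" and h :: "'n \<Rightarrow> real"
    and m :: nat and mu_h eps r gamma0 lambda0 :: real
    and gamma lambda :: "nat \<Rightarrow> real"
    and x0 xh :: 'n
    and x :: "nat \<Rightarrow> nat \<Rightarrow> 'n"
    and gf gh :: "nat \<Rightarrow> nat \<Rightarrow> 'n"
  defines "f \<equiv> (\<lambda>y. \<Sum>i<m. fs i y)"
  defines "fstar \<equiv> (INF y\<in>X. f y)"
  defines "Xstar \<equiv> {y \<in> X. f y = fstar}"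
  defines "xbar \<equiv> (\<lambda>N. (\<Sum>k<N. gamma k powr r *\<^sub>R x k 0) /\<^sub>R (\<Sum>k<N. gamma k powr r))"
  assumes X: "X \<noteq> {}" "compact X" "convex X"
    and m: "m \<ge> 1"
    and fs_convex: "\<And>i. i < m \<Longrightarrow> convex_on UNIV (fs i)"
    and mu_h: "mu_h > 0" and h_sc: "strongly_convex h mu_h"
    and xh: "xh \<in> Xstar" "\<And>y. y \<in> Xstar \<Longrightarrow> h xh \<le> h y"
    and eps: "0 < eps" "eps < 0.5" and r: "r < 1"
    and gamma0: "gamma0 > 0" and lambda0: "lambda0 > 0"
    and step: "gamma0 * lambda0 * mu_h \<le> 2 * real m"
    and gamma_def: "\<And>k. gamma k = gamma0 / (real k + 1) powr (0.5 + 0.5 * eps)"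
    and lambda_def: "\<And>k. lambda k = lambda0 / (real k + 1) powr (0.5 - eps)"
    and x0: "x0 \<in> X" "x 0 0 = x0"
    and gf: "\<And>k i. i < m \<Longrightarrow> gf k i \<in> subdiff (fs i) (x k i)"
    and gh: "\<And>k i. i < m \<Longrightarrow> gh k i \<in> subdiff h (x k i)"
    and inner_step: "\<And>k i. i < m \<Longrightarrow>
        x k (Suc i) = closest_point X (x k i - gamma k *\<^sub>R (gf k i + (lambda k / real m) *\<^sub>R gh k i))"
    and outer_step: "\<And>k. x (Suc k) 0 = x k m"
  shows "xbar \<longlonglongrightarrow> xh \<and>
         (\<lambda>N. f (xbar N) - fstar) \<in> O(\<lambda>N. 1 / real N powr (0.5 - eps))"
proof -
  have Xcl: "closed X" using X(2) by (rule compact_imp_closed)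
  obtain B where B: "B > 0" "\<And>z. z \<in> X \<Longrightarrow> norm z \<le> B"
    using compact_imp_bounded[OF X(2)] unfolding bounded_pos by blast
  have hconv: "convex_on UNIV h" using sc_convex[OF h_sc] mu_h by simp
  have fconv: "convex_on UNIV f" unfolding f_def by (rule convex_on_sum_fun) (rule fs_convex)
  have fsc: "\<And>i. i < m \<Longrightarrow> continuous_on UNIV (fs i)"
    using fs_convex by (intro convex_on_continuous) auto
  have hc: "continuous_on UNIV h" using hconv by (intro convex_on_continuous) auto
  have fc: "continuous_on UNIV f" unfolding f_def by (intro continuous_on_sum fsc) simp
  define F where "F z = (\<Sum>i<m. \<bar>fs i z\<bar>) + \<bar>h z\<bar>" for z
  have Fc: "continuous_on (cball 0 (B + 1)) F" unfolding F_def
    by (intro continuous_intros continuous_on_subset[OF fsc] continuous_on_subset[OF hc]) auto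
  obtain zM where zM: "zM \<in> cball 0 (B + 1)" "\<And>z. z \<in> cball 0 (B + 1) \<Longrightarrow> F z \<le> F zM"
    using continuous_attains_sup[OF compact_cball _ Fc] B(1) by fastforce
  define M where "M = F zM"
  have Mfs: "\<bar>fs i z\<bar> \<le> M" if "i < m" "norm z \<le> B + 1" for i z
  proof -
    have "\<bar>fs i z\<bar> \<le> (\<Sum>i<m. \<bar>fs i z\<bar>)" using that by (intro member_le_sum) auto
    also have "\<dots> \<le> F z" by (simp add: F_def)
    also have "\<dots> \<le> M" unfolding M_def using zM that by simp
    finally show ?thesis .
  qed
  have Mh: "\<bar>h z\<bar> \<le> M" if "norm z \<le> B + 1" for z
  proof -
    have "\<bar>h z\<bar> \<le> F z" by (simp add: F_def sum_nonneg)
    also have "\<dots> \<le> M" unfolding M_def using zM that by simp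
    finally show ?thesis .
  qed
  have M0: "M \<ge> 0" using Mh[of 0] B by simp
  have xin: "x k i \<in> X" if "i \<le> m" for k i
  proof (cases i)
    case 0
    show ?thesis
    proof (cases k)
      case 0 then show ?thesis using \<open>i = 0\<close> x0 by simp
    next
      case (Suc k')
      have "x k i = x k' (Suc (m - 1))" using \<open>i = 0\<close> Suc outer_step m by simp
      also have "\<dots> \<in> X" using inner_step[of "m - 1" k'] m closest_point_in_set[OF Xcl X(1)] by simp
      finally show ?thesis .
    qed
  next
    case (Suc j)
    then show ?thesis using inner_step[of j k] that closest_point_in_set[OF Xcl X(1)] by simp
  qed
  have xnorm: "norm (x k i) \<le> B" if "i \<le> m" for k i using B(2) xin that by blast
  define a where "a = 0.5 + 0.5 * eps"
  define b where "b = 0.5 - eps"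
  have gpos: "gamma k > 0" for k using gamma_def gamma0 by simp
  have lpos: "lambda k > 0" for k using lambda_def lambda0 by simp
  have lle: "lambda k \<le> lambda0" for k
  proof -
    have "1 \<le> (real k + 1) powr (0.5 - eps)" using eps by (intro ge_one_powr_ge_zero) auto
    hence "lambda0 / (real k + 1) powr (0.5 - eps) \<le> lambda0 / 1"
      using lambda0 by (intro divide_left_mono) auto
    then show ?thesis using lambda_def[of k] by simp
  qed
  have lm: "lambda k / real m \<le> lambda0" for k
  proof -
    have "lambda k / real m \<le> lambda k" using m lpos[of k] by (simp add: divide_le_eq mult_le_cancel_left1)
    then show ?thesis using lle[of k] by simp
  qed
  define G where "G = 2 * M"
  have gfb: "norm (gf k i) \<le> G" if "i < m" for k i
  proof -
    have "norm z \<le> B + 1" if "z \<in> cball (x k i) 1" for z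
      using norm_triangle_sub[of z "x k i"] that xnorm[of i k] \<open>i < m\<close> by (simp add: dist_norm norm_minus_commute)
    then show ?thesis unfolding G_def using subgrad_bound[OF gf[OF \<open>i < m\<close>, of k]] Mfs[OF \<open>i < m\<close>] by blast
  qed
  have ghb: "norm (gh k i) \<le> G" if "i < m" for k i
  proof -
    have "norm z \<le> B + 1" if "z \<in> cball (x k i) 1" for z
      using norm_triangle_sub[of z "x k i"] that xnorm[of i k] \<open>i < m\<close> by (simp add: dist_norm norm_minus_commute)
    then show ?thesis unfolding G_def using subgrad_bound[OF gh[OF \<open>i < m\<close>, of k]] Mh by blast
  qed
  define D where "D = G * (1 + lambda0)"
  define dv where "dv k i = gf k i + (lambda k / real m) *\<^sub>R gh k i" for k i
  have G0: "G \<ge> 0" using M0 by (simp add: G_def)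
  have D0: "D \<ge> 0" using G0 lambda0 by (simp add: D_def)
  have dvb: "norm (dv k i) \<le> D" if "i < m" for k i
  proof -
    have "norm (dv k i) \<le> norm (gf k i) + norm ((lambda k / real m) *\<^sub>R gh k i)"
      unfolding dv_def by (rule norm_triangle_ineq)
    also have "norm ((lambda k / real m) *\<^sub>R gh k i) = (lambda k / real m) * norm (gh k i)"
      using lpos[of k] by simp
    also have "(lambda k / real m) * norm (gh k i) \<le> lambda0 * G"
      using lm[of k] ghb[OF that, of k] lpos[of k] lambda0 G0 by (intro mult_mono) auto
    finally show ?thesis using gfb[OF that, of k] by (simp add: D_def algebra_simps)
  qed
  have stepb: "norm (x k (Suc j) - x k j) \<le> gamma k * D" if "j < m" for k j
  proof -
    have "norm (x k (Suc j) - x k j) \<le> norm ((x k j - gamma k *\<^sub>R dv k j) - x k j)"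
      unfolding inner_step[OF that] dv_def
      by (rule proj_step[OF X(3) Xcl X(1) xin]) (use that in simp)
    also have "\<dots> = gamma k * norm (dv k j)" using gpos[of k] by simp
    also have "\<dots> \<le> gamma k * D" using dvb[OF that] gpos[of k] by (intro mult_left_mono) auto
    finally show ?thesis .
  qed
  have drift: "norm (x k j - x k 0) \<le> real j * (gamma k * D)" if "j \<le> m" for k j
    using that
  proof (induction j)
    case 0 then show ?case by simp
  next
    case (Suc j)
    have "norm (x k (Suc j) - x k 0) \<le> norm (x k (Suc j) - x k j) + norm (x k j - x k 0)"
      using norm_triangle_ineq[of "x k (Suc j) - x k j" "x k j - x k 0"] by simp
    then show ?case using Suc stepb[of j k] by (simp add: algebra_simps)
  qed
  have drift': "norm (x k j - x k 0) \<le> real m * gamma k * D" if "j \<le> m" for k j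
  proof -
    have "real j * (gamma k * D) \<le> real m * (gamma k * D)"
      using that gpos[of k] D0 by (intro mult_right_mono) auto
    then show ?thesis using drift[OF that, of k] by simp
  qed
  define L where "L = 2 * M"
  have lipf: "fs i v - fs i u \<le> L * norm (u - v)" if "i < m" "u \<in> X" "v \<in> X" for i u v
    unfolding L_def by (rule convex_lip[OF fs_convex[OF that(1)] Mfs[OF that(1)]]) (use B(2) that in auto)
  have liph: "h v - h u \<le> L * norm (u - v)" if "u \<in> X" "v \<in> X" for u v
    unfolding L_def by (rule convex_lip[OF hconv Mh]) (use B(2) that in auto)
  have L0: "L \<ge> 0" using M0 by (simp add: L_def)
  define Q where "Q = D\<^sup>2 + 2 * L * real m * D * (1 + lambda0)"
  have inner_ineq: "(norm (x k j - y))\<^sup>2 \<le> (norm (x k 0 - y))\<^sup>2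
      - 2 * gamma k * (\<Sum>i<j. fs i (x k 0) - fs i y)
      - 2 * gamma k * (real j * lambda k / real m) * (h (x k 0) - h y) + real j * (gamma k)\<^sup>2 * Q"
    if "j \<le> m" "y \<in> X" for k j y
    using that(1)
  proof (induction j)
    case 0 then show ?case by simp
  next
    case (Suc j)
    hence jm: "j < m" by simp
    let ?g = "gamma k" and ?lam = "lambda k" and ?xj = "x k j" and ?x0 = "x k 0"
    let ?P = "L * (real m * ?g * D)"
    let ?A = "fs j ?x0 - fs j y" and ?H = "h ?x0 - h y"
    have g0: "?g > 0" using gpos by simp
    have xjX: "?xj \<in> X" using xin jm by simp
    have x0X: "?x0 \<in> X" using xin by simp
    have P0: "?P \<ge> 0" using L0 g0 D0 by simp
    have E1: "(norm (x k (Suc j) - y))\<^sup>2 \<le> (norm ((?xj - y) - ?g *\<^sub>R dv k j))\<^sup>2"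
    proof -
      have "norm (x k (Suc j) - y) \<le> norm ((?xj - ?g *\<^sub>R dv k j) - y)"
        unfolding inner_step[OF jm] dv_def by (rule proj_step[OF X(3) Xcl X(1) \<open>y \<in> X\<close>])
      moreover have "(?xj - ?g *\<^sub>R dv k j) - y = (?xj - y) - ?g *\<^sub>R dv k j" by simp
      ultimately show ?thesis by (intro power_mono) auto
    qed
    have E2: "(norm ((?xj - y) - ?g *\<^sub>R dv k j))\<^sup>2 = (norm (?xj - y))\<^sup>2 - 2 * ?g * inner (dv k j) (?xj - y) + ?g\<^sup>2 * (norm (dv k j))\<^sup>2"
      by (rule norm_sq_expand)
    have dv2: "(norm (dv k j))\<^sup>2 \<le> D\<^sup>2" using dvb[OF jm, of k] by (intro power_mono) auto
    have ip: "inner (dv k j) (?xj - y) = inner (gf k j) (?xj - y) + (?lam / real m) * inner (gh k j) (?xj - y)"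
      by (simp add: dv_def inner_add_left)
    have sgf: "inner (gf k j) (?xj - y) \<ge> fs j ?xj - fs j y"
    proof -
      have "fs j y \<ge> fs j ?xj + inner (gf k j) (y - ?xj)" using gf[OF jm, of k] unfolding subdiff_def by blast
      then show ?thesis by (simp add: inner_diff_right)
    qed
    have sgh: "inner (gh k j) (?xj - y) \<ge> h ?xj - h y"
    proof -
      have "h y \<ge> h ?xj + inner (gh k j) (y - ?xj)" using gh[OF jm, of k] unfolding subdiff_def by blast
      then show ?thesis by (simp add: inner_diff_right)
    qed
    have dr: "L * norm (?xj - ?x0) \<le> ?P"
      using drift'[of j k] jm L0 by (intro mult_left_mono) auto
    have lf: "fs j ?x0 - fs j ?xj \<le> ?P" using lipf[OF jm xjX x0X] dr by linarith
    have lh: "h ?x0 - h ?xj \<le> ?P" using liph[OF xjX x0X] dr by linarith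
    have lamm: "0 \<le> ?lam / real m" "?lam / real m \<le> lambda0" using lpos[of k] lm[of k] by auto
    have A1: "(?lam / real m) * inner (gh k j) (?xj - y) \<ge> (?lam / real m) * (?H - ?P)"
      using sgh lh lamm(1) by (intro mult_left_mono) auto
    have A2: "(?lam / real m) * ?P \<le> lambda0 * ?P" using lamm(2) P0 by (intro mult_right_mono) auto
    have A3: "(?lam / real m) * (?H - ?P) = (?lam / real m) * ?H - (?lam / real m) * ?P"
      by (simp add: algebra_simps)
    have I1: "inner (dv k j) (?xj - y) \<ge> ?A + (?lam / real m) * ?H - ?P * (1 + lambda0)"
    proof -
      have "?P * (1 + lambda0) = ?P + lambda0 * ?P" by (simp add: algebra_simps)
      then show ?thesis using ip sgf lf A1 A2 A3 by linarith
    qed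
    have I2: "2 * ?g * inner (dv k j) (?xj - y) \<ge> 2 * ?g * (?A + (?lam / real m) * ?H - ?P * (1 + lambda0))"
      using I1 g0 by (intro mult_left_mono) auto
    have I3: "?g\<^sup>2 * (norm (dv k j))\<^sup>2 \<le> ?g\<^sup>2 * D\<^sup>2" using dv2 by (intro mult_left_mono) auto
    have Eq1: "2 * ?g * (?A + (?lam / real m) * ?H - ?P * (1 + lambda0))
        = 2 * ?g * ?A + 2 * ?g * (?lam / real m) * ?H - ?g\<^sup>2 * (Q - D\<^sup>2)"
    proof -
      have "2 * ?g * (?P * (1 + lambda0)) = ?g\<^sup>2 * (Q - D\<^sup>2)"
        by (simp add: Q_def power2_eq_square algebra_simps)
      moreover have "2 * ?g * (?A + (?lam / real m) * ?H - ?P * (1 + lambda0))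
        = 2 * ?g * ?A + 2 * ?g * (?lam / real m) * ?H - 2 * ?g * (?P * (1 + lambda0))"
        by (simp add: right_diff_distrib distrib_left mult.assoc)
      ultimately show ?thesis by simp
    qed
    have Eq2: "2 * ?g * (real (Suc j) * ?lam / real m) * ?H = 2 * ?g * (real j * ?lam / real m) * ?H + 2 * ?g * (?lam / real m) * ?H"
    proof -
      have e: "real (Suc j) * ?lam / real m = real j * ?lam / real m + ?lam / real m"
        by (simp add: add_divide_distrib distrib_right)
      show ?thesis by (subst e, simp only: ring_distribs)
    qed
    have Eq3: "2 * ?g * (\<Sum>i<Suc j. fs i ?x0 - fs i y) = 2 * ?g * (\<Sum>i<j. fs i ?x0 - fs i y) + 2 * ?g * ?A"
      by (simp add: algebra_simps)
    have Eq4: "real (Suc j) * ?g\<^sup>2 * Q = real j * ?g\<^sup>2 * Q + ?g\<^sup>2 * Q" by (simp add: algebra_simps)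
    have IH: "(norm (?xj - y))\<^sup>2 \<le> (norm (?x0 - y))\<^sup>2
      - 2 * ?g * (\<Sum>i<j. fs i ?x0 - fs i y)
      - 2 * ?g * (real j * ?lam / real m) * ?H + real j * ?g\<^sup>2 * Q" using Suc by simp
    have S1: "(norm (x k (Suc j) - y))\<^sup>2 \<le> (norm (?xj - y))\<^sup>2 - 2 * ?g * ?A - 2 * ?g * (?lam / real m) * ?H + ?g\<^sup>2 * Q"
    proof -
      have "?g\<^sup>2 * (Q - D\<^sup>2) = ?g\<^sup>2 * Q - ?g\<^sup>2 * D\<^sup>2" by (simp add: right_diff_distrib)
      then show ?thesis using E1 E2 I2 I3 Eq1 by linarith
    qed
    show ?case
    proof -
      have "(norm (x k (Suc j) - y))\<^sup>2 \<le> (norm (?x0 - y))\<^sup>2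
      - 2 * ?g * (\<Sum>i<j. fs i ?x0 - fs i y)
      - 2 * ?g * (real j * ?lam / real m) * ?H + real j * ?g\<^sup>2 * Q
       - 2 * ?g * ?A - 2 * ?g * (?lam / real m) * ?H + ?g\<^sup>2 * Q" using S1 IH by linarith
      then show ?thesis unfolding Eq2 Eq3 Eq4 by linarith
    qed
  qed
  have OUT: "(norm (x (Suc k) 0 - y))\<^sup>2 \<le> (norm (x k 0 - y))\<^sup>2
      - 2 * gamma k * (f (x k 0) - f y)
      - 2 * gamma k * lambda k * (h (x k 0) - h y) + real m * (gamma k)\<^sup>2 * Q" if "y \<in> X" for k y
  proof -
    have I: "(norm (x k m - y))\<^sup>2 \<le> (norm (x k 0 - y))\<^sup>2
      - 2 * gamma k * (\<Sum>i<m. fs i (x k 0) - fs i y)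
      - 2 * gamma k * (real m * lambda k / real m) * (h (x k 0) - h y) + real m * (gamma k)\<^sup>2 * Q"
      using inner_ineq[OF order_refl that] .
    have e1: "(\<Sum>i<m. fs i (x k 0) - fs i y) = f (x k 0) - f y" by (simp add: f_def sum_subtractf)
    have e2: "real m * lambda k / real m = lambda k" using m by simp
    show ?thesis using I unfolding e1 e2 outer_step .
  qed
  have bddf: "bdd_below (f ` X)"
    using compact_continuous_image[OF continuous_on_subset[OF fc] X(2)]
    by (intro bounded_imp_bdd_below compact_imp_bounded) auto
  have fmin: "fstar \<le> f y" if "y \<in> X" for y unfolding fstar_def using bddf that by (rule cINF_lower)
  have xhX: "xh \<in> X" and fxh: "f xh = fstar" using xh(1) by (auto simp: Xstar_def)
  define E where "E k = (norm (x k 0 - xh))\<^sup>2" for k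
  define R where "R = (2 * B)\<^sup>2"
  have E0: "E k \<ge> 0" for k by (simp add: E_def)
  have ER: "E k \<le> R" for k
  proof -
    have "norm (x k 0 - xh) \<le> norm (x k 0) + norm xh" by (rule norm_triangle_ineq4)
    also have "\<dots> \<le> 2 * B" using xnorm[of 0 k] B(2)[OF xhX] by simp
    finally show ?thesis unfolding E_def R_def by (intro power_mono) auto
  qed
  define C where "C = real m * Q"
  have Q0: "Q \<ge> 0" unfolding Q_def using D0 L0 lambda0 by simp
  have C0: "C \<ge> 0" unfolding C_def using Q0 by simp
  have hlow: "h (x k 0) - h xh \<ge> - 2 * M" for k
  proof -
    have "\<bar>h (x k 0)\<bar> \<le> M" using Mh[of "x k 0"] xnorm[of 0 k] by simp
    moreover have "\<bar>h xh\<bar> \<le> M" using Mh[of xh] B(2)[OF xhX] by simp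
    ultimately show ?thesis by (simp add: abs_le_iff)
  qed
  have flow: "f (x k 0) - fstar \<ge> 0" for k using fmin[OF xin[of 0 k]] by simp
  have OUTh: "2 * gamma k * (f (x k 0) - fstar) + 2 * gamma k * lambda k * (h (x k 0) - h xh) \<le> E k - E (Suc k) + C * (gamma k)\<^sup>2" for k
  proof -
    have "C * (gamma k)\<^sup>2 = real m * (gamma k)\<^sup>2 * Q" by (simp add: C_def)
    then show ?thesis using OUT[OF xhX, of k] unfolding E_def fxh[symmetric] by linarith
  qed
  have ab: "b \<le> a" "a + b < 1" "0 \<le> b" "0 < a" "a < 1" "b < 1"
    using eps unfolding a_def b_def by auto
  define e1 where "e1 = 1 - a * r"
  have ar: "a * (1 - r) > 0" using ab r by simp
  have ar2: "a * r = a - a * (1 - r)" by (simp add: algebra_simps)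
  have e1p: "e1 > 0" unfolding e1_def using ar ar2 ab by linarith
  define e2 where "e2 = 1 - a * r - b"
  have e2p: "e2 > 0" unfolding e2_def using ar ar2 ab by linarith
  define t where "t k = real k + 1" for k
  have t1: "t k \<ge> 1" for k by (simp add: t_def)
  have gam_eq: "gamma k = gamma0 * t k powr (-a)" for k
  proof -
    have "gamma k = gamma0 / t k powr a" using gamma_def[of k] by (simp add: t_def a_def)
    also have "\<dots> = gamma0 * t k powr (-a)" by (simp add: powr_minus_divide)
    finally show ?thesis .
  qed
  have lam_eq: "lambda k = lambda0 * t k powr (-b)" for k
  proof -
    have "lambda k = lambda0 / t k powr b" using lambda_def[of k] by (simp add: t_def b_def)
    also have "\<dots> = lambda0 * t k powr (-b)" by (simp add: powr_minus_divide)
    finally show ?thesis .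
  qed
  have w_eq: "gamma k powr r = gamma0 powr r * t k powr (e1 - 1)" for k
  proof -
    have "gamma k powr r = gamma0 powr r * (t k powr (-a)) powr r"
      unfolding gam_eq using gamma0 by (simp add: powr_mult)
    also have "(t k powr (-a)) powr r = t k powr (e1 - 1)" by (simp add: powr_powr e1_def)
    finally show ?thesis .
  qed
  have g1_eq: "gamma k powr (r - 1) = gamma0 powr (r - 1) * t k powr (a * (1 - r))" for k
  proof -
    have "gamma k powr (r - 1) = gamma0 powr (r - 1) * (t k powr (-a)) powr (r - 1)"
      unfolding gam_eq using gamma0 by (simp add: powr_mult)
    also have "(t k powr (-a)) powr (r - 1) = t k powr (a * (1 - r))" by (simp add: powr_powr algebra_simps)
    finally show ?thesis .
  qed
  have wsplit: "gamma k powr r = gamma k powr (r - 1) * gamma k" for k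
  proof -
    have "gamma k powr r = gamma k powr ((r - 1) + 1)" by simp
    also have "\<dots> = gamma k powr (r - 1) * gamma k powr 1" by (rule powr_add)
    also have "gamma k powr 1 = gamma k" using gpos[of k] by simp
    finally show ?thesis .
  qed
  have gl: "gamma k \<le> (gamma0 / lambda0) * lambda k" for k
  proof -
    have "t k powr (-a) \<le> t k powr (-b)" using ab t1[of k] by (intro powr_mono) auto
    hence "gamma0 * t k powr (-a) \<le> gamma0 * t k powr (-b)" using gamma0 by simp
    thus ?thesis unfolding gam_eq lam_eq using lambda0 by simp
  qed
  define w where "w k = gamma k powr r" for k
  have wpos: "w k > 0" for k using gpos[of k] by (simp add: w_def)
  define cb where "cb k = gamma k powr (r - 1) / 2" for k
  define K1 where "K1 = 2 * M + C * gamma0 / (2 * lambda0)"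
  have K10: "K1 \<ge> 0" unfolding K1_def using M0 C0 gamma0 lambda0 by simp
  have stepb: "w k * (f (x k 0) - fstar) \<le> cb k * (E k - E (Suc k)) + K1 * (w k * lambda k)" for k
  proof -
    have gg: "gamma k * gamma k \<le> gamma k * ((gamma0 / lambda0) * lambda k)"
      using gl[of k] gpos[of k] by (intro mult_left_mono) auto
    have g2: "(gamma k)\<^sup>2 \<le> (gamma0 / lambda0) * (gamma k * lambda k)"
      using gg by (simp add: power2_eq_square algebra_simps)
    have gl0: "gamma k * lambda k > 0" using gpos[of k] lpos[of k] by simp
    have h1: "gamma k * lambda k * (h (x k 0) - h xh) \<ge> gamma k * lambda k * (- 2 * M)"
      using hlow[of k] gl0 by (intro mult_left_mono) auto
    have h2: "C * (gamma k)\<^sup>2 \<le> C * ((gamma0 / lambda0) * (gamma k * lambda k))"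
      by (rule mult_left_mono[OF g2 C0])
    have h3: "2 * (K1 * (gamma k * lambda k)) = 4 * M * (gamma k * lambda k) + C * ((gamma0 / lambda0) * (gamma k * lambda k))"
      using lambda0 by (simp add: K1_def field_simps)
    have h4: "2 * gamma k * lambda k * (h (x k 0) - h xh) = 2 * (gamma k * lambda k * (h (x k 0) - h xh))" by simp
    have h5: "gamma k * lambda k * (- 2 * M) = - (2 * M * (gamma k * lambda k))" by simp
    have h6: "2 * gamma k * (f (x k 0) - fstar) = 2 * (gamma k * (f (x k 0) - fstar))" by simp
    have "2 * (gamma k * (f (x k 0) - fstar)) \<le> (E k - E (Suc k)) + 2 * (K1 * (gamma k * lambda k))"
      using OUTh[of k] h1 h2 h3 h4 h5 h6 by linarith
    moreover have gen: "\<And>X Y Z::real. 2 * X \<le> Y + 2 * Z \<Longrightarrow> X \<le> Y / 2 + Z" by linarith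
    ultimately have A: "gamma k * (f (x k 0) - fstar) \<le> (E k - E (Suc k)) / 2 + K1 * (gamma k * lambda k)" by blast
    have "w k * (f (x k 0) - fstar) = gamma k powr (r - 1) * (gamma k * (f (x k 0) - fstar))"
      unfolding w_def wsplit by simp
    also have "\<dots> \<le> gamma k powr (r - 1) * ((E k - E (Suc k)) / 2 + K1 * (gamma k * lambda k))"
      using A by (intro mult_left_mono) auto
    also have "\<dots> = cb k * (E k - E (Suc k)) + K1 * (w k * lambda k)"
      unfolding cb_def w_def wsplit by (simp add: algebra_simps)
    finally show ?thesis .
  qed
  have cb_eq: "cb k = gamma0 powr (r - 1) / 2 * t k powr (a * (1 - r))" for k
    unfolding cb_def g1_eq by simp
  have cbmono: "cb k \<le> cb (Suc k)" for k
  proof -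
    have "t k powr (a * (1 - r)) \<le> t (Suc k) powr (a * (1 - r))"
      using ab r t1[of k] by (intro powr_mono2) (auto simp: t_def)
    then show ?thesis unfolding cb_eq by (intro mult_left_mono) auto
  qed
  have cb0: "cb k \<ge> 0" for k by (simp add: cb_def)
  have sumb: "(\<Sum>k<N. w k * (f (x k 0) - fstar)) \<le> cb N * R + K1 * (\<Sum>k<N. w k * lambda k)" for N
  proof -
    have "(\<Sum>k<N. w k * (f (x k 0) - fstar)) \<le> (\<Sum>k<N. cb k * (E k - E (Suc k)) + K1 * (w k * lambda k))"
      by (rule sum_mono) (rule stepb)
    also have "\<dots> = (\<Sum>k<N. cb k * (E k - E (Suc k))) + K1 * (\<Sum>k<N. w k * lambda k)"
      by (simp add: sum.distrib sum_distrib_left)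
    also have "(\<Sum>k<N. cb k * (E k - E (Suc k))) \<le> cb N * R"
      by (rule wtele[of cb E R N, OF cb0 cbmono E0 ER])
    finally show ?thesis by simp
  qed
  define W where "W N = (\<Sum>k<N. w k)" for N
  have Wpos: "W N > 0" if "N \<ge> 1" for N
  proof -
    have "0 \<in> {..<N}" using that by simp
    hence "{..<N} \<noteq> {}" by blast
    then show ?thesis unfolding W_def using wpos by (intro sum_pos) auto
  qed
  have W_eq: "W N = gamma0 powr r * (\<Sum>k<N. (real k + 1) powr (e1 - 1))" for N
    unfolding W_def w_def w_eq t_def by (simp add: sum_distrib_left)
  have W_low: "W N \<ge> (gamma0 powr r * min 1 (1 / e1)) * real N powr e1" if "N \<ge> 1" for N
    unfolding W_eq using psum_bounds(1)[OF e1p that] gamma0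
    by (simp add: mult.assoc mult_left_mono)
  have xbar_eq: "xbar N = (\<Sum>k<N. w k *\<^sub>R x k 0) /\<^sub>R (\<Sum>k<N. w k)" for N
    by (simp add: xbar_def w_def)
  have xbarX: "xbar N \<in> X" if "N \<ge> 1" for N
    unfolding xbar_eq by (rule avg_in[OF X(3) that wpos xin]) simp
  have jf: "f (xbar N) - fstar \<le> (\<Sum>k<N. w k * (f (x k 0) - fstar)) / W N" if "N \<ge> 1" for N
    unfolding xbar_eq W_def by (rule jensen_w[OF fconv that wpos])
  have jh: "h (xbar N) - h xh \<le> (\<Sum>k<N. w k * (h (x k 0) - h xh)) / W N" if "N \<ge> 1" for N
    unfolding xbar_eq W_def by (rule jensen_w[OF hconv that wpos])
  define p where "p = a * (1 - r)"
  have p0: "p \<ge> 0" using ar by (simp add: p_def)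
  have wl_eq: "w k * lambda k = gamma0 powr r * lambda0 * (real k + 1) powr (e2 - 1)" for k
  proof -
    have "w k * lambda k = gamma0 powr r * lambda0 * (t k powr (e1 - 1) * t k powr (-b))"
      unfolding w_def w_eq lam_eq by (simp add: algebra_simps)
    also have "t k powr (e1 - 1) * t k powr (-b) = t k powr (e2 - 1)"
      by (simp add: powr_add[symmetric] e1_def e2_def)
    finally show ?thesis by (simp add: t_def)
  qed
  define Ab where "Ab = gamma0 powr (r - 1) / 2 * R"
  define Bb where "Bb = K1 * (gamma0 powr r * lambda0)"
  define c1 where "c1 = gamma0 powr r * min 1 (1 / e1)"
  have c1p: "c1 > 0" using gamma0 e1p by (simp add: c1_def)
  define Kb where "Kb = (Ab * 2 powr p + Bb * max 1 (1 / e2)) / c1"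
  have fbound: "f (xbar N) - fstar \<le> Kb * real N powr (- b)" if N: "N \<ge> 1" for N
  proof -
    have "f (xbar N) - fstar \<le> (\<Sum>k<N. w k * (f (x k 0) - fstar)) / W N" by (rule jf[OF N])
    also have "\<dots> \<le> (cb N * R + K1 * (\<Sum>k<N. w k * lambda k)) / W N"
      using sumb[of N] Wpos[OF N] by (intro divide_right_mono) auto
    also have "cb N * R + K1 * (\<Sum>k<N. w k * lambda k) = Ab * (real N + 1) powr p + Bb * (\<Sum>k<N. (real k + 1) powr (e2 - 1))"
      unfolding cb_eq wl_eq Ab_def Bb_def p_def t_def by (simp add: sum_distrib_left algebra_simps)
    also have "(Ab * (real N + 1) powr p + Bb * (\<Sum>k<N. (real k + 1) powr (e2 - 1))) / W N \<le> Kb * real N powr (- b)"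
      unfolding Kb_def
    proof (rule ratio_lemma[OF N _ _ c1p _ p0])
      show "Ab \<ge> 0" unfolding Ab_def R_def by simp
      show "Bb \<ge> 0" unfolding Bb_def using K10 lambda0 by simp
      show "0 \<le> max 1 (1 / e2)" by simp
      show "c1 * real N powr e1 \<le> W N" using W_low[OF N] by (simp add: c1_def)
      show "(\<Sum>k<N. (real k + 1) powr (e2 - 1)) \<le> max 1 (1 / e2) * real N powr e2"
        by (rule psum_bounds(2)[OF e2p N])
      show "p - e1 \<le> - b" using ab unfolding p_def e1_def by (simp add: algebra_simps)
      show "e2 - e1 \<le> - b" unfolding e2_def e1_def by simp
    qed
    finally show ?thesis .
  qed
  define ca where "ca k = gamma k powr (r - 1) / (2 * lambda k)" for k
  have stepa: "w k * (h (x k 0) - h xh) \<le> ca k * (E k - E (Suc k)) + (C / 2) * (w k * gamma k / lambda k)" for k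
  proof -
    have A: "2 * gamma k * lambda k * (h (x k 0) - h xh) \<le> E k - E (Suc k) + C * (gamma k)\<^sup>2"
    proof -
      have "2 * gamma k * (f (x k 0) - fstar) \<ge> 0" using flow[of k] gpos[of k] by simp
      then show ?thesis using OUTh[of k] by linarith
    qed
    have ca0: "ca k \<ge> 0" using lpos[of k] by (simp add: ca_def)
    have "w k * (h (x k 0) - h xh) = ca k * (2 * gamma k * lambda k * (h (x k 0) - h xh))"
      unfolding ca_def w_def wsplit using lpos[of k] by (simp add: field_simps)
    also have "\<dots> \<le> ca k * (E k - E (Suc k) + C * (gamma k)\<^sup>2)"
      using A ca0 by (intro mult_left_mono) auto
    also have "\<dots> = ca k * (E k - E (Suc k)) + (C / 2) * (w k * gamma k / lambda k)"
      unfolding ca_def w_def wsplit using lpos[of k] by (simp add: field_simps power2_eq_square)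
    finally show ?thesis .
  qed
  define pa where "pa = a * (1 - r) + b"
  have pa0: "pa \<ge> 0" using ar ab by (simp add: pa_def)
  have ca_eq: "ca k = gamma0 powr (r - 1) / (2 * lambda0) * t k powr pa" for k
  proof -
    have "ca k = gamma0 powr (r - 1) / (2 * lambda0) * (t k powr (a * (1 - r)) / t k powr (-b))"
      unfolding ca_def g1_eq lam_eq by (simp add: field_simps)
    also have "t k powr (a * (1 - r)) / t k powr (-b) = t k powr pa"
      by (simp add: powr_diff[symmetric] pa_def)
    finally show ?thesis .
  qed
  have camono: "ca k \<le> ca (Suc k)" for k
  proof -
    have "t k powr pa \<le> t (Suc k) powr pa"
      using pa0 t1[of k] by (intro powr_mono2) (auto simp: t_def)
    then show ?thesis unfolding ca_eq using gamma0 lambda0 by (intro mult_left_mono) auto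
  qed
  have ca0: "ca k \<ge> 0" for k using lpos[of k] by (simp add: ca_def)
  define rho where "rho = min (eps / 2) (e1 / 2)"
  have rho: "rho > 0" "rho \<le> a - b" "rho \<le> eps / 2" "rho \<le> e1 / 2"
    using eps e1p unfolding rho_def a_def b_def by auto
  define e3 where "e3 = e1 - rho"
  have e3p: "e3 > 0" using rho e1p by (simp add: e3_def)
  have wgl: "w k * gamma k / lambda k \<le> (gamma0 / lambda0 * gamma0 powr r) * (real k + 1) powr (e3 - 1)" for k
  proof -
    have "w k * gamma k / lambda k = (gamma0 / lambda0 * gamma0 powr r) * (t k powr (e1 - 1) * (t k powr (-a) / t k powr (-b)))"
      unfolding w_def w_eq unfolding gam_eq lam_eq using lambda0 by (simp add: field_simps)
    also have "t k powr (-a) / t k powr (-b) = t k powr (-(a - b))"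
      by (simp add: powr_diff[symmetric])
    finally have eq1: "w k * gamma k / lambda k = (gamma0 / lambda0 * gamma0 powr r) * (t k powr (e1 - 1) * t k powr (-(a - b)))" .
    have le: "t k powr (e1 - 1) * t k powr (-(a - b)) \<le> t k powr (e1 - 1) * t k powr (-rho)"
      using rho t1[of k] by (intro mult_left_mono powr_mono) auto
    have eq2: "t k powr (e1 - 1) * t k powr (-rho) = t k powr (e3 - 1)"
      by (simp add: powr_add[symmetric] e3_def algebra_simps)
    have K0: "gamma0 / lambda0 * gamma0 powr r \<ge> 0" using gamma0 lambda0 by simp
    show ?thesis unfolding eq1 using mult_left_mono[OF le K0] eq2 by (simp add: t_def)
  qed
  have suma: "(\<Sum>k<N. w k * (h (x k 0) - h xh)) \<le> ca N * R + (C / 2) * (gamma0 / lambda0 * gamma0 powr r) * (\<Sum>k<N. (real k + 1) powr (e3 - 1))" for N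
  proof -
    have "(\<Sum>k<N. w k * (h (x k 0) - h xh)) \<le> (\<Sum>k<N. ca k * (E k - E (Suc k)) + (C / 2) * (w k * gamma k / lambda k))"
      by (rule sum_mono) (rule stepa)
    also have "\<dots> = (\<Sum>k<N. ca k * (E k - E (Suc k))) + (C / 2) * (\<Sum>k<N. w k * gamma k / lambda k)"
      by (simp add: sum.distrib sum_distrib_left)
    also have "(\<Sum>k<N. ca k * (E k - E (Suc k))) \<le> ca N * R"
      by (rule wtele[of ca E R N, OF ca0 camono E0 ER])
    also have "(C / 2) * (\<Sum>k<N. w k * gamma k / lambda k) \<le> (C / 2) * (\<Sum>k<N. (gamma0 / lambda0 * gamma0 powr r) * (real k + 1) powr (e3 - 1))"
      using C0 by (intro mult_left_mono sum_mono wgl) auto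
    finally show ?thesis by (simp add: sum_distrib_left mult.assoc)
  qed
  define Aa where "Aa = gamma0 powr (r - 1) / (2 * lambda0) * R"
  define Ba where "Ba = (C / 2) * (gamma0 / lambda0 * gamma0 powr r)"
  define Ka where "Ka = (Aa * 2 powr pa + Ba * max 1 (1 / e3)) / c1"
  have hbound: "h (xbar N) - h xh \<le> Ka * real N powr (- rho)" if N: "N \<ge> 1" for N
  proof -
    have "h (xbar N) - h xh \<le> (\<Sum>k<N. w k * (h (x k 0) - h xh)) / W N" by (rule jh[OF N])
    also have "\<dots> \<le> (ca N * R + (C / 2) * (gamma0 / lambda0 * gamma0 powr r) * (\<Sum>k<N. (real k + 1) powr (e3 - 1))) / W N"
      using suma[of N] Wpos[OF N] by (intro divide_right_mono) auto
    also have "ca N * R + (C / 2) * (gamma0 / lambda0 * gamma0 powr r) * (\<Sum>k<N. (real k + 1) powr (e3 - 1)) = Aa * (real N + 1) powr pa + Ba * (\<Sum>k<N. (real k + 1) powr (e3 - 1))"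
      unfolding ca_eq Aa_def Ba_def t_def by (simp add: algebra_simps)
    also have "(Aa * (real N + 1) powr pa + Ba * (\<Sum>k<N. (real k + 1) powr (e3 - 1))) / W N \<le> Ka * real N powr (- rho)"
      unfolding Ka_def
    proof (rule ratio_lemma[OF N _ _ c1p _ pa0])
      show "Aa \<ge> 0" unfolding Aa_def R_def using lambda0 by simp
      show "Ba \<ge> 0" unfolding Ba_def using C0 lambda0 gamma0 by simp
      show "0 \<le> max 1 (1 / e3)" by simp
      show "c1 * real N powr e1 \<le> W N" using W_low[OF N] by (simp add: c1_def)
      show "(\<Sum>k<N. (real k + 1) powr (e3 - 1)) \<le> max 1 (1 / e3) * real N powr e3"
        by (rule psum_bounds(2)[OF e3p N])
      have "pa - e1 = a + b - 1" by (simp add: pa_def e1_def algebra_simps)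
      moreover have "a + b - 1 = - (eps / 2)" by (simp add: a_def b_def)
      ultimately show "pa - e1 \<le> - rho" using rho by linarith
      show "e3 - e1 \<le> - rho" unfolding e3_def by simp
    qed
    finally show ?thesis .
  qed
  have fmin': "\<And>y. y \<in> X \<Longrightarrow> f xh \<le> f y" using fmin fxh by simp
  have hmin': "h xh \<le> h y" if "y \<in> X" "f y \<le> f xh" for y
  proof -
    have "f y = fstar" using fmin[OF that(1)] that(2) fxh by simp
    hence "y \<in> Xstar" using that(1) by (simp add: Xstar_def)
    thus ?thesis by (rule xh(2))
  qed
  have bpos: "b > 0" using eps by (simp add: b_def)
  have T1: "(\<lambda>N. Kb * real N powr (- b)) \<longlonglongrightarrow> 0"
    using tendsto_mult[OF tendsto_const[of Kb] tendsto_neg_powr[OF _ filterlim_real_sequentially, of "- b"]] bpos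
    by simp
  have T2: "(\<lambda>N. Ka * real N powr (- rho)) \<longlonglongrightarrow> 0"
    using tendsto_mult[OF tendsto_const[of Ka] tendsto_neg_powr[OF _ filterlim_real_sequentially, of "- rho"]] rho(1)
    by simp
  have conv: "xbar \<longlonglongrightarrow> xh"
  proof (rule tendstoI)
    fix e :: real assume e: "e > 0"
    obtain del where del: "del > 0" "\<And>z. z \<in> X \<Longrightarrow> f z \<le> f xh + del \<Longrightarrow> h z \<le> h xh + del \<Longrightarrow> dist z xh < e"
      using sep[OF X(2) X(3) fconv h_sc mu_h fc hc xhX fmin' hmin' e] by blast
    have ev1: "eventually (\<lambda>N. Kb * real N powr (- b) < del) sequentially"
      using order_tendstoD(2)[OF T1 del(1)] .
    have ev2: "eventually (\<lambda>N. Ka * real N powr (- rho) < del) sequentially"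
      using order_tendstoD(2)[OF T2 del(1)] .
    have ev3: "eventually (\<lambda>N. N \<ge> 1) sequentially" by simp
    show "eventually (\<lambda>N. dist (xbar N) xh < e) sequentially"
      using ev1 ev2 ev3
    proof eventually_elim
      case (elim N)
      have "f (xbar N) \<le> f xh + del" using fbound[OF elim(3)] elim(1) fxh by simp
      moreover have "h (xbar N) \<le> h xh + del" using hbound[OF elim(3)] elim(2) by simp
      ultimately show ?case using del(2) xbarX[OF elim(3)] by blast
    qed
  qed
  have bigo: "(\<lambda>N. f (xbar N) - fstar) \<in> O(\<lambda>N. 1 / real N powr (0.5 - eps))"
  proof (rule bigoI[of _ Kb])
    show "eventually (\<lambda>N. norm (f (xbar N) - fstar) \<le> Kb * norm (1 / real N powr (0.5 - eps))) at_top"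
      using eventually_ge_at_top[of 1]
    proof eventually_elim
      case (elim N)
      have nn: "f (xbar N) - fstar \<ge> 0" using fmin[OF xbarX[OF elim]] by simp
      have eqp: "1 / real N powr (0.5 - eps) = real N powr (- b)" using powr_minus_divide[of "real N" b] unfolding b_def by simp
      show ?case using fbound[OF elim] nn unfolding eqp by simp
    qed
  qed
  show ?thesis using conv bigo by blast
qed


end
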